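(* Let $n\ge2$ and let $h:\mathbb{B}^n\to\mathbb{B}^n$ be a Möbius transformation mapping $\mathbb{B}^n$ onto itself. Then for all $x,y\in\mathbb{B}^n$ and each $d\in\{j^*,w,s,p\}$, $$d_{\mathbb{B}^n}(h(x),h(y))\le\frac{2d_{\mathbb{B}^n}(x,y)}{1+d_{\mathbb{B}^n}(x,y)^2}\le2d_{\mathbb{B}^n}(x,y),$$ and the constant $2$ in the second (linear) bound $d_{\mathbb{B}^n}(h(x),h(y))\le 2d_{\mathbb{B}^n}(x,y)$ is sharp.
   Context: $\mathbb{B}^n$ is the unit ball; $S^{n-1}(x,r)$ is the Euclidean sphere of center $x$ and radius $r$. A Möbius transformation of $\overline{\mathbb{R}}^n=\mathbb{R}^n\cup\{\infty\}$ is a finite composition of reflections in hyperplanes and inversions in spheres. For a domain $G\subsetneq\mathbb{R}^n$ and $x\in G$, $d_G(x)=\inf\{|x-z|:z\in\partial G\}$. $j^*_G(x,y)=\frac{|x-y|}{|x-y|+2\min\{d_G(x),d_G(y)\}}$; $s_G(x,y)=\frac{|x-y|}{\inf_{z\in\partial G}(|x-z|+|z-y|)}$; $p_G(x,y)=\frac{|x-y|}{\sqrt{|x-y|^2+4d_G(x)d_G(y)}}$; for convex $G$, $w_G(x,y)=\frac{|x-y|}{\min\{\inf_{\tilde y\in\tilde Y}|x-\tilde y|,\ \inf_{\tilde x\in\tilde X}|y-\tilde x|\}}$ with $\tilde X=\{\tilde x\in S^{n-1}(x,2d_G(x)):(x+\tilde x)/2\in\partial G\}$, $\tilde Y=\{\tilde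 y\in S^{n-1}(y,2d_G(y)):(y+\tilde y)/2\in\partial G\}$. *)

theory Defs
  imports "HOL-Analysis.Analysis"
begin

text \<open>Extended space: the type 'a option, where None plays the role of the point at infinity.\<close>

definition hyperplane_reflection :: "'a::euclidean_space \<Rightarrow> real \<Rightarrow> 'a option \<Rightarrow> 'a option" where
  "hyperplane_reflection a t p =
     (case p of None \<Rightarrow> None
      | Some x \<Rightarrow> Some (x - (2 * (a \<bullet> x - t) / (a \<bullet> a)) *\<^sub>R a))"

definition sphere_inversion :: "'a::euclidean_space \<Rightarrow> real \<Rightarrow> 'a option \<Rightarrow> 'a option" where
  "sphere_inversion c r p =
     (case p of None \<Rightarrow> Some c
      | Some x \<Rightarrow> (if x = c then None
                   else Some (c + (r\<^sup>2 / (norm (x - c))\<^sup>2) *\<^sub>R (x - c))))"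

inductive_set mobius :: "('a::euclidean_space option \<Rightarrow> 'a option) set" where
  reflection: "a \<noteq> 0 \<Longrightarrow> hyperplane_reflection a t \<in> mobius"
| inversion: "r > 0 \<Longrightarrow> sphere_inversion c r \<in> mobius"
| comp: "f \<in> mobius \<Longrightarrow> g \<in> mobius \<Longrightarrow> f \<circ> g \<in> mobius"

definition bdist :: "'a::euclidean_space set \<Rightarrow> 'a \<Rightarrow> real" where
  "bdist G x = Inf ((\<lambda>z. dist x z) ` frontier G)"

definition jstar_metric :: "'a::euclidean_space set \<Rightarrow> 'a \<Rightarrow> 'a \<Rightarrow> real" where
  "jstar_metric G x y = dist x y / (dist x y + 2 * min (bdist G x) (bdist G y))"

definition s_metric :: "'a::euclidean_space set \<Rightarrow> 'a \<Rightarrow> 'a \<Rightarrow> real" where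
  "s_metric G x y = dist x y / Inf ((\<lambda>z. dist x z + dist z y) ` frontier G)"

definition p_metric :: "'a::euclidean_space set \<Rightarrow> 'a \<Rightarrow> 'a \<Rightarrow> real" where
  "p_metric G x y = dist x y / sqrt ((dist x y)\<^sup>2 + 4 * bdist G x * bdist G y)"

definition w_refl_set :: "'a::euclidean_space set \<Rightarrow> 'a \<Rightarrow> 'a set" where
  "w_refl_set G x = {u \<in> sphere x (2 * bdist G x). (1/2) *\<^sub>R (x + u) \<in> frontier G}"

definition w_metric :: "'a::euclidean_space set \<Rightarrow> 'a \<Rightarrow> 'a \<Rightarrow> real" where
  "w_metric G x y = dist x y /
     min (Inf ((\<lambda>v. dist x v) ` w_refl_set G y)) (Inf ((\<lambda>u. dist y u) ` w_refl_set G x))"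

definition ball_mobius :: "('a::euclidean_space option \<Rightarrow> 'a option) \<Rightarrow> bool" where
  "ball_mobius h \<longleftrightarrow> h \<in> mobius \<and> h ` (Some ` ball 0 1) = Some ` ball 0 1"

end

theory Submission
  imports Defs
begin


lemma two_frac_mono:
  fixes J d :: real
  assumes "0 \<le> J" "J \<le> d" "d \<le> 1"
  shows "2*J/(1+J^2) \<le> 2*d/(1+d^2)"
proof -
  have "d*J \<le> 1*1" using assms by (intro mult_mono) auto
  hence "0 \<le> 2*(d-J)*(1-d*J)" using assms by (intro mult_nonneg_nonneg) auto
  hence "2*J*(1+d^2) \<le> 2*d*(1+J^2)" by (simp add: algebra_simps power2_eq_square)
  moreover have "0 < 1+d^2" "0 < 1+J^2" by (auto simp: add_pos_nonneg)
  ultimately show ?thesis by (simp add: field_simps)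
qed

lemma G:
  fixes D a b Den :: real
  assumes a: "0<a" "a\<le>1" "0<b" "b\<le>1" "0 \<le> D" "D \<le> 2 - a - b"
    and Den: "sqrt(D^2+4*a*b) \<le> Den" "Den \<le> D + 2 * min a b"
  shows "D/Den \<le> sqrt(D^2/(D^2+a*(2-a)*(b*(2-b))))"
    and "sqrt(D^2/(D^2+a*(2-a)*(b*(2-b)))) \<le> 2*(D/Den)/(1+(D/Den)^2)"
    and "0 \<le> D/Den" "D/Den \<le> 1"
proof -
  define m where "m = min a b"
  define P where "P = a*(2-a)*(b*(2-b))"
  have m: "0 < m" "m \<le> a" "m \<le> b" "m \<le> 1" using a by (auto simp: m_def)
  have Ppos: "0 < P" using a unfolding P_def by (intro mult_pos_pos) auto
  have P4: "P \<le> 4*a*b"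
  proof -
    have "(2-a)*(2-b) \<le> 2*2" using a by (intro mult_mono) auto
    hence "(a*b)*((2-a)*(2-b)) \<le> (a*b)*4" using a by (intro mult_left_mono) auto
    thus ?thesis unfolding P_def by (simp add: algebra_simps)
  qed
  have s0: "0 < sqrt(D^2+4*a*b)" using a by (intro real_sqrt_gt_zero add_nonneg_pos) auto
  have Denpos: "0 < Den" using s0 Den by linarith
  have sP: "0 < sqrt(D^2+P)" using Ppos by (intro real_sqrt_gt_zero add_nonneg_pos) auto
  have Teq: "sqrt(D^2/(D^2+P)) = D/sqrt(D^2+P)" using a by (simp add: real_sqrt_divide)
  show d0: "0 \<le> D/Den" using a Denpos by simp
  have "D \<le> sqrt(D^2+4*a*b)" using a by (intro real_le_rsqrt) auto
  thus d1: "D/Den \<le> 1" using Den Denpos by simp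
  have "D/Den \<le> D/sqrt(D^2+4*a*b)" using a Den s0 Denpos by (intro divide_left_mono) auto
  also have "\<dots> \<le> D/sqrt(D^2+P)" using a P4 sP by (intro divide_left_mono) auto
  finally show "D/Den \<le> sqrt(D^2/(D^2+a*(2-a)*(b*(2-b))))" using Teq unfolding P_def by simp
  define vv where "vv = D + 2*m"
  have vpos: "0 < vv" using m a unfolding vv_def by linarith
  define J where "J = D/vv"
  have J0: "0 \<le> J" using a vpos unfolding J_def by simp
  have Jd: "J \<le> D/Den" unfolding J_def vv_def m_def using a Den Denpos by (intro divide_left_mono) auto
  have main: "sqrt(D^2/(D^2+P)) \<le> 2*J/(1+J^2)"
  proof (cases "D = 0")
    case True thus ?thesis by (simp add: J_def)
  next
    case False
    hence Dp: "0 < D" using a by simp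
    have Jeq: "2*J/(1+J^2) = 2*D * vv/(vv^2+D^2)" unfolding J_def using vpos
      by (simp add: field_simps power2_eq_square)
    have k1: "vv^2 - D^2 = 4*m*(D+m)" unfolding vv_def by (simp add: algebra_simps power2_eq_square)
    have k2: "2*(D+m) \<le> vv *(2-m)"
    proof -
      have "D \<le> 2 - 2*m" using a m by linarith
      hence "m*D \<le> m*(2-2*m)" using m by (intro mult_left_mono) auto
      thus ?thesis unfolding vv_def by (simp add: algebra_simps)
    qed
    have k3: "vv^2 - D^2 \<le> 2* vv *(m*(2-m))"
    proof -
      have "4*m*(D+m) = 2*m*(2*(D+m))" by simp
      also have "\<dots> \<le> 2*m*(vv *(2-m))" using k2 m by (intro mult_left_mono) auto
      finally show ?thesis using k1 by (simp add: algebra_simps)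
    qed
    have k4: "0 \<le> vv^2 - D^2" using k1 m a by simp
    have ma: "m*(2-m) \<le> a*(2-a)"
    proof -
      have "a*(2-a) - m*(2-m) = (a-m)*(2-a-m)" by (simp add: algebra_simps)
      moreover have "0 \<le> (a-m)*(2-a-m)" using m a by (intro mult_nonneg_nonneg) auto
      ultimately show ?thesis by linarith
    qed
    have mb: "m*(2-m) \<le> b*(2-b)"
    proof -
      have "b*(2-b) - m*(2-m) = (b-m)*(2-b-m)" by (simp add: algebra_simps)
      moreover have "0 \<le> (b-m)*(2-b-m)" using m a by (intro mult_nonneg_nonneg) auto
      ultimately show ?thesis by linarith
    qed
    have m0: "0 \<le> m*(2-m)" using m by auto
    have k5: "(m*(2-m))^2 \<le> P"
    proof -
      have "(m*(2-m))*(m*(2-m)) \<le> (a*(2-a))*(b*(2-b))"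
        using ma m0 by (intro mult_mono[OF ma mb]) auto
      thus ?thesis unfolding P_def power2_eq_square by simp
    qed
    have "(vv^2-D^2)^2 \<le> (2* vv *(m*(2-m)))^2" using k3 k4 by (intro power_mono) auto
    also have "\<dots> = 4* vv^2*(m*(2-m))^2" by (simp add: power_mult_distrib)
    also have "\<dots> \<le> 4* vv^2*P" using k5 by (intro mult_left_mono) auto
    finally have k6: "(vv^2+D^2)^2 \<le> 4* vv^2*(D^2+P)"
      by (simp add: algebra_simps power2_eq_square)
    have pos: "0 < vv^2+D^2" using vpos by (simp add: add_pos_nonneg)
    have pos2: "0 < D^2+P" using Ppos by (simp add: add_nonneg_pos)
    have "D^2/(D^2+P) \<le> (2*D * vv/(vv^2+D^2))^2"
    proof -
      have "D^2/(D^2+P) = D^2 * (vv^2+D^2)^2 / ((D^2+P)*(vv^2+D^2)^2)" using pos pos2 by simp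
      also have "\<dots> \<le> D^2 * (4* vv^2*(D^2+P)) / ((D^2+P)*(vv^2+D^2)^2)"
        using k6 pos pos2 by (intro divide_right_mono mult_left_mono) auto
      also have "\<dots> = (D^2*(4* vv^2))*(D^2+P) / ((vv^2+D^2)^2*(D^2+P))"
        by (simp add: algebra_simps)
      also have "\<dots> = (D^2*(4* vv^2)) / (vv^2+D^2)^2" using pos2 by simp
      also have "\<dots> = (2*D * vv/(vv^2+D^2))^2" by (simp add: power_divide power_mult_distrib)
      finally show ?thesis .
    qed
    hence "sqrt(D^2/(D^2+P)) \<le> 2*D * vv/(vv^2+D^2)" using pos vpos Dp
      by (intro real_le_lsqrt) auto
    thus ?thesis using Jeq by simp
  qed
  also have "\<dots> \<le> 2*(D/Den)/(1+(D/Den)^2)" using J0 Jd d1 by (rule two_frac_mono)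
  finally show "sqrt(D^2/(D^2+a*(2-a)*(b*(2-b)))) \<le> 2*(D/Den)/(1+(D/Den)^2)" unfolding P_def .
qed


lemma half_sum: "(1/2) *\<^sub>R y + (1/2) *\<^sub>R y = (y::'a::real_vector)"
  by (metis scaleR_add_left[symmetric] field_sum_of_halves scaleR_one)

lemma two_sum: "y + y = 2 *\<^sub>R (y::'a::real_vector)"
  by (simp add: scaleR_2)

lemma frontier_B: "frontier (ball (0::'a::euclidean_space) 1) = sphere 0 1"
  by (simp add: frontier_ball)

lemma unit_dir: "\<exists>m::'a::euclidean_space. norm m = 1 \<and> y = norm y *\<^sub>R m"
proof (cases "y = 0")
  case True
  obtain e :: 'a where "e \<in> Basis" using nonempty_Basis by blast
  thus ?thesis using True by (intro exI[of _ e]) auto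
next
  case False thus ?thesis by (intro exI[of _ "y /\<^sub>R norm y"]) auto
qed

lemma bdist_B: fixes x :: "'a::euclidean_space"
  assumes "norm x < 1" shows "bdist (ball 0 1) x = 1 - norm x"
proof -
  obtain m :: 'a where m: "norm m = 1" "x = norm x *\<^sub>R m" using unit_dir by blast
  have "dist x m = 1 - norm x"
  proof -
    have "x - m = (norm x - 1) *\<^sub>R m" using m by (metis scaleR_collapse scaleR_diff_left scaleR_one)
    thus ?thesis using m assms by (simp add: dist_norm)
  qed
  moreover have "\<And>z. z \<in> sphere 0 1 \<Longrightarrow> 1 - norm x \<le> dist x z"
  proof -
    fix z :: 'a assume "z \<in> sphere 0 1"
    thus "1 - norm x \<le> dist x z" using norm_triangle_ineq2[of z x]
      by (simp add: dist_norm norm_minus_commute)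
  qed
  moreover have "1 - norm x \<in> dist x ` sphere 0 1"
    using calculation(1) m by (intro rev_image_eqI[of m]) auto
  ultimately show ?thesis unfolding bdist_def frontier_B
    by (intro cInf_eq_minimum) auto
qed

lemma s_lower:
  fixes x y z :: "'a::euclidean_space"
  assumes x: "norm x < 1" and y: "norm y < 1" and z: "norm z = 1"
  shows "sqrt((dist x y)^2 + 4*(1-norm x)*(1-norm y)) \<le> dist x z + dist z y"
proof -
  define u where "u = z - x"
  define v where "v = z - y"
  define p where "p = u \<bullet> z"
  define q where "q = v \<bullet> z"
  define u' where "u' = u - p *\<^sub>R z"
  define v' where "v' = v - q *\<^sub>R z"
  have zz: "z \<bullet> z = 1" using z by (simp add: dot_square_norm)
  have pa: "1 - norm x \<le> p"
  proof -
    have "x \<bullet> z \<le> norm x * norm z" by (rule norm_cauchy_schwarz)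
    thus ?thesis using zz z unfolding p_def u_def by (simp add: inner_diff_left)
  qed
  have qb: "1 - norm y \<le> q"
  proof -
    have "y \<bullet> z \<le> norm y * norm z" by (rule norm_cauchy_schwarz)
    thus ?thesis using zz z unfolding q_def v_def by (simp add: inner_diff_left)
  qed
  have u'z: "u' \<bullet> z = 0" unfolding u'_def p_def using zz by (simp add: inner_diff_left)
  have v'z: "v' \<bullet> z = 0" unfolding v'_def q_def using zz by (simp add: inner_diff_left)
  have uu: "(norm u)^2 = p^2 + (norm u')^2"
  proof -
    have "u = p *\<^sub>R z + u'" unfolding u'_def by simp
    hence "(norm u)^2 = (p *\<^sub>R z + u') \<bullet> (p *\<^sub>R z + u')" by (simp add: dot_square_norm)
    also have "\<dots> = p^2 + u' \<bullet> u'" using u'z zz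
      by (simp add: inner_add_left inner_add_right inner_commute power2_eq_square)
    finally show ?thesis by (simp add: dot_square_norm)
  qed
  have vv: "(norm v)^2 = q^2 + (norm v')^2"
  proof -
    have "v = q *\<^sub>R z + v'" unfolding v'_def by simp
    hence "(norm v)^2 = (q *\<^sub>R z + v') \<bullet> (q *\<^sub>R z + v')" by (simp add: dot_square_norm)
    also have "\<dots> = q^2 + v' \<bullet> v'" using v'z zz
      by (simp add: inner_add_left inner_add_right inner_commute power2_eq_square)
    finally show ?thesis by (simp add: dot_square_norm)
  qed
  have uv: "u \<bullet> v = p*q + u' \<bullet> v'"
  proof -
    have "u \<bullet> v = (p *\<^sub>R z + u') \<bullet> (q *\<^sub>R z + v')" unfolding u'_def v'_def by simp
    also have "\<dots> = p*q + u' \<bullet> v'" using u'z v'z zz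
      by (simp add: inner_add_left inner_add_right inner_commute)
    finally show ?thesis .
  qed
  have cs: "- (norm u' * norm v') \<le> u' \<bullet> v'"
    using norm_cauchy_schwarz[of "-u'" v'] by simp
  have nn: "p*q + norm u' * norm v' \<le> norm u * norm v"
  proof -
    have "(p*q + norm u' * norm v')^2 \<le> (norm u * norm v)^2"
    proof -
      have "(norm u * norm v)^2 = (p^2 + (norm u')^2)*(q^2+(norm v')^2)"
        using uu vv by (simp add: power_mult_distrib)
      hence "(norm u * norm v)^2 - (p*q + norm u' * norm v')^2 = (p * norm v' - q * norm u')^2"
        by (simp add: algebra_simps power2_eq_square)
      thus ?thesis by (metis diff_ge_0_iff_ge zero_le_power2)
    qed
    thus ?thesis by (rule power2_le_imp_le) simp
  qed
  have a0: "0 < 1 - norm x" "0 < 1 - norm y" using x y by auto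
  have pq: "(1-norm x)*(1-norm y) \<le> p*q" using pa qb a0 by (intro mult_mono) auto
  have key: "2*(1-norm x)*(1-norm y) \<le> norm u * norm v + u \<bullet> v"
    using nn uv cs pq by linarith
  have D2: "(dist x y)^2 = (norm u)^2 + (norm v)^2 - 2*(u \<bullet> v)"
  proof -
    have "x - y = v - u" unfolding u_def v_def by simp
    hence "(dist x y)^2 = (v - u) \<bullet> (v - u)" by (simp add: dist_norm dot_square_norm)
    thus ?thesis by (simp add: inner_diff_left inner_diff_right inner_commute power2_norm_eq_inner)
  qed
  have "(dist x y)^2 + 4*(1-norm x)*(1-norm y) \<le> (dist x z + dist z y)^2"
  proof -
    have "dist x z = norm u" "dist z y = norm v" unfolding u_def v_def
      by (auto simp: dist_norm norm_minus_commute)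
    thus ?thesis using D2 key by (simp add: power2_eq_square algebra_simps)
  qed
  thus ?thesis by (intro real_le_lsqrt) auto
qed


lemma W_lower:
  fixes x y u :: "'a::euclidean_space"
  assumes x: "norm x < 1" and y: "norm y < 1" and u: "u \<in> w_refl_set (ball 0 1) y"
  shows "sqrt((dist x y)^2 + 4*(1-norm x)*(1-norm y)) \<le> dist x u"
proof -
  define mm where "mm = (1/2) *\<^sub>R (y + u)"
  have mm1: "norm mm = 1" and du: "dist y u = 2*(1 - norm y)"
    using u y unfolding w_refl_set_def mm_def frontier_B by (auto simp: bdist_B)
  have mmy: "mm - y = (1/2) *\<^sub>R (u - y)" unfolding mm_def by (simp add: algebra_simps half_sum)
  have nmy: "norm (mm - y) = 1 - norm y" using du mmy by (simp add: dist_norm norm_minus_commute)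
  have mm2: "mm \<bullet> mm = 1" using mm1 by (simp add: dot_square_norm)
  have i1: "mm \<bullet> y = norm y"
  proof -
    have "(norm (mm - y))^2 = 1 - 2*(mm \<bullet> y) + (norm y)^2" using mm2
      by (simp add: power2_norm_eq_inner inner_diff_left inner_diff_right inner_commute)
    thus ?thesis using nmy by (simp add: power2_eq_square algebra_simps)
  qed
  have yeq: "y = norm y *\<^sub>R mm"
  proof -
    define w where "w = y - norm y *\<^sub>R mm"
    have "w \<bullet> w = y \<bullet> y - 2*norm y*(mm \<bullet> y) + (norm y)^2*(mm \<bullet> mm)" unfolding w_def
      by (simp add: inner_diff_left inner_diff_right inner_commute power2_eq_square algebra_simps)
    also have "\<dots> = 0" using mm2 i1 by (simp add: dot_square_norm power2_eq_square)
    finally have "w = 0" by simp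
    thus ?thesis unfolding w_def by simp
  qed
  have "2 *\<^sub>R mm = y + u" unfolding mm_def by simp
  hence ueq: "u = 2 *\<^sub>R mm - y" by (metis add_diff_cancel_left')
  have e1: "(dist x u)^2 = (dist x y)^2 + 4*((y - mm) \<bullet> (x - mm))"
    unfolding ueq dist_norm power2_norm_eq_inner
    by (simp add: inner_diff_left inner_diff_right inner_add_left inner_add_right inner_commute
        algebra_simps)
  have e2: "(y - mm) \<bullet> (x - mm) = (1 - norm y)*(1 - mm \<bullet> x)"
  proof -
    have "y \<bullet> x = norm y * (mm \<bullet> x)" by (subst yeq) simp
    thus ?thesis using mm2 i1
      by (simp add: inner_diff_left inner_diff_right inner_commute algebra_simps)
  qed
  have e3: "1 - norm x \<le> 1 - mm \<bullet> x"
    using norm_cauchy_schwarz[of mm x] mm1 by simp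
  have "(dist x y)^2 + 4*(1-norm x)*(1-norm y) \<le> (dist x u)^2"
  proof -
    have "(1-norm y)*(1-norm x) \<le> (1-norm y)*(1 - mm \<bullet> x)" using e3 y by (intro mult_left_mono) auto
    thus ?thesis using e1 e2 by (simp add: algebra_simps)
  qed
  thus ?thesis by (intro real_le_lsqrt) auto
qed

lemma W_witness:
  fixes x y :: "'a::euclidean_space"
  assumes x: "norm x < 1" and y: "norm y < 1"
  shows "\<exists>u \<in> w_refl_set (ball 0 1) y. dist x u \<le> dist x y + 2*(1-norm y)"
proof -
  obtain m :: 'a where m: "norm m = 1" "y = norm y *\<^sub>R m" using unit_dir by blast
  have ym: "y - m = (norm y - 1) *\<^sub>R m" using m by (metis scaleR_collapse scaleR_diff_left scaleR_one)
  have nym: "norm (y - m) = 1 - norm y" using ym m y by simp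
  define u where "u = 2 *\<^sub>R m - y"
  have "u \<in> w_refl_set (ball 0 1) y"
  proof -
    have "y - u = 2 *\<^sub>R (y - m)" unfolding u_def by (simp add: algebra_simps two_sum)
    hence "dist y u = 2*(1-norm y)" using nym by (simp add: dist_norm)
    moreover have "(1/2) *\<^sub>R (y + u) = m" unfolding u_def by (simp add: algebra_simps two_sum)
    moreover have "norm (y + u) = 2" unfolding u_def using m by simp
    ultimately show ?thesis unfolding w_refl_set_def frontier_B using y m by (simp add: bdist_B)
  qed
  moreover have "dist x u \<le> dist x y + 2*(1-norm y)"
  proof -
    have "x - u = (x - y) + 2 *\<^sub>R (y - m)" unfolding u_def by (simp add: algebra_simps two_sum)
    hence "norm (x - u) \<le> norm (x - y) + norm (2 *\<^sub>R (y - m))" by (metis norm_triangle_ineq)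
    thus ?thesis using nym by (simp add: dist_norm)
  qed
  ultimately show ?thesis by blast
qed

lemma W_Inf:
  fixes x y :: "'a::euclidean_space"
  assumes x: "norm x < 1" and y: "norm y < 1"
  shows "sqrt((dist x y)^2 + 4*(1-norm x)*(1-norm y)) \<le> Inf (dist x ` w_refl_set (ball 0 1) y)"
    and "Inf (dist x ` w_refl_set (ball 0 1) y) \<le> dist x y + 2*(1-norm y)"
proof -
  obtain u where u: "u \<in> w_refl_set (ball 0 1) y" "dist x u \<le> dist x y + 2*(1-norm y)"
    using W_witness[OF x y] by blast
  show "sqrt((dist x y)^2 + 4*(1-norm x)*(1-norm y)) \<le> Inf (dist x ` w_refl_set (ball 0 1) y)"
    using u W_lower[OF x y] by (intro cInf_greatest) auto
  have "Inf (dist x ` w_refl_set (ball 0 1) y) \<le> dist x u"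
    using u by (intro cInf_lower) (auto intro: bdd_belowI[of _ 0])
  thus "Inf (dist x ` w_refl_set (ball 0 1) y) \<le> dist x y + 2*(1-norm y)" using u by linarith
qed

lemma S_Inf:
  fixes x y :: "'a::euclidean_space"
  assumes x: "norm x < 1" and y: "norm y < 1"
  shows "sqrt((dist x y)^2 + 4*(1-norm x)*(1-norm y)) \<le> Inf ((\<lambda>z. dist x z + dist z y) ` sphere 0 1)"
    and "Inf ((\<lambda>z. dist x z + dist z y) ` sphere 0 1) \<le> dist x y + 2*(1-norm y)"
    and "Inf ((\<lambda>z. dist x z + dist z y) ` sphere 0 1) \<le> dist x y + 2*(1-norm x)"
proof -
  obtain m :: 'a where m: "norm m = 1" "y = norm y *\<^sub>R m" using unit_dir by blast
  have ym: "y - m = (norm y - 1) *\<^sub>R m" using m by (metis scaleR_collapse scaleR_diff_left scaleR_one)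
  have nym: "dist m y = 1 - norm y"
  proof -
    have "dist m y = norm (y - m)" by (simp add: dist_norm norm_minus_commute)
    thus ?thesis using ym m y by simp
  qed
  obtain m' :: 'a where m': "norm m' = 1" "x = norm x *\<^sub>R m'" using unit_dir by blast
  have xm: "x - m' = (norm x - 1) *\<^sub>R m'" using m' by (metis scaleR_collapse scaleR_diff_left scaleR_one)
  have nxm: "dist x m' = 1 - norm x" using xm m' x by (simp add: dist_norm)
  have bdd: "bdd_below ((\<lambda>z. dist x z + dist z y) ` sphere 0 1)"
    by (rule bdd_belowI[of _ 0]) auto
  show "sqrt((dist x y)^2 + 4*(1-norm x)*(1-norm y)) \<le> Inf ((\<lambda>z. dist x z + dist z y) ` sphere 0 1)"
    using m s_lower[OF x y] by (intro cInf_greatest) auto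
  have "Inf ((\<lambda>z. dist x z + dist z y) ` sphere 0 1) \<le> dist x m + dist m y"
    using m bdd by (intro cInf_lower) auto
  moreover have "dist x m \<le> dist x y + dist y m" by (rule dist_triangle)
  ultimately show "Inf ((\<lambda>z. dist x z + dist z y) ` sphere 0 1) \<le> dist x y + 2*(1-norm y)"
    using nym by (simp add: dist_commute)
  have "Inf ((\<lambda>z. dist x z + dist z y) ` sphere 0 1) \<le> dist x m' + dist m' y"
    using m' bdd by (intro cInf_lower) auto
  moreover have "dist m' y \<le> dist m' x + dist x y" by (rule dist_triangle)
  ultimately show "Inf ((\<lambda>z. dist x z + dist z y) ` sphere 0 1) \<le> dist x y + 2*(1-norm x)"
    using nxm by (simp add: dist_commute)
qed

lemma J_bound:
  fixes x y :: "'a::euclidean_space"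
  assumes x: "norm x < 1" and y: "norm y < 1"
  shows "sqrt((dist x y)^2 + 4*(1-norm x)*(1-norm y)) \<le> dist x y + 2 * min (1-norm x) (1-norm y)"
proof -
  define a where "a = 1 - norm x"
  define b where "b = 1 - norm y"
  define D where "D = dist x y"
  have ab: "\<bar>a - b\<bar> \<le> D" unfolding a_def b_def D_def dist_norm
    using norm_triangle_ineq3[of y x] by (simp add: norm_minus_commute)
  have a0: "0 < a" "0 < b" "0 \<le> D" using x y by (auto simp: a_def b_def D_def)
  have "a*b \<le> D * min a b + (min a b)^2"
  proof (cases "a \<le> b")
    case True
    hence "a*(b-a) \<le> a*D" using ab a0 by (intro mult_left_mono) auto
    thus ?thesis using True by (simp add: min_def algebra_simps power2_eq_square)
  next
    case False
    hence "b*(a-b) \<le> b*D" using ab a0 by (intro mult_left_mono) auto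
    thus ?thesis using False by (simp add: min_def algebra_simps power2_eq_square)
  qed
  hence "D^2 + 4*a*b \<le> (D + 2 * min a b)^2" by (simp add: algebra_simps power2_eq_square)
  hence "sqrt(D^2 + 4*a*b) \<le> D + 2 * min a b" using a0 by (intro real_le_lsqrt) auto
  thus ?thesis by (simp add: a_def b_def D_def)
qed



definition Phi :: "'a::euclidean_space option \<Rightarrow> real \<times> 'a \<times> real" where
  "Phi p = (case p of None \<Rightarrow> (0, 0, 1) | Some x \<Rightarrow> (1, x, (norm x)^2))"

definition LL :: "real \<times> 'a::euclidean_space \<times> real \<Rightarrow> real \<times> 'a \<times> real \<Rightarrow> real" where
  "LL u u' = fst (snd u) \<bullet> fst (snd u') - (fst u * snd (snd u') + snd (snd u) * fst u')/2"

definition Mref :: "'a::euclidean_space \<Rightarrow> real \<Rightarrow> real \<times> 'a \<times> real \<Rightarrow> real \<times> 'a \<times> real" where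
  "Mref a t u = (fst u, fst (snd u) - (2*(a \<bullet> fst (snd u) - t * fst u)/(a \<bullet> a)) *\<^sub>R a,
      snd (snd u) - 4*t*(a \<bullet> fst (snd u) - t * fst u)/(a \<bullet> a))"

definition Minv :: "'a::euclidean_space \<Rightarrow> real \<Rightarrow> real \<times> 'a \<times> real \<Rightarrow> real \<times> 'a \<times> real" where
  "Minv c r u = (let s = fst u; v = fst (snd u); w = snd (snd u); E = w - 2*(c \<bullet> v) + (c \<bullet> c) * s in
     (E, E *\<^sub>R c + r^2 *\<^sub>R (v - s *\<^sub>R c), (c \<bullet> c)*E + 2*r^2*(c \<bullet> (v - s *\<^sub>R c)) + r^4 * s))"

lemma Mref_LL: assumes "a \<noteq> 0" shows "LL (Mref a t u) (Mref a t u') = LL u u'"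
proof -
  obtain s v w where u: "u = (s,v,w)" by (cases u) auto
  obtain s' v' w' where u': "u' = (s',v',w')" by (cases u') auto
  have A: "a \<bullet> a \<noteq> 0" using assms by simp
  show ?thesis unfolding u u' LL_def Mref_def using A
    by (simp add: inner_diff_left inner_diff_right inner_commute field_simps)
qed

lemma Minv_LL: "LL (Minv c r u) (Minv c r u') = r^4 * LL u u'"
proof -
  obtain s v w where u: "u = (s,v,w)" by (cases u) auto
  obtain s' v' w' where u': "u' = (s',v',w')" by (cases u') auto
  show ?thesis unfolding u u' LL_def Minv_def Let_def
    by (simp add: inner_diff_left inner_diff_right inner_add_left inner_add_right inner_commute field_simps)
qed


lemma Mref_Phi: assumes "a \<noteq> 0"
  shows "Mref a t (Phi p) = Phi (hyperplane_reflection a t p)"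
proof (cases p)
  case None thus ?thesis by (simp add: Mref_def Phi_def hyperplane_reflection_def)
next
  case (Some x)
  have A: "a \<bullet> a \<noteq> 0" using assms by simp
  have "(norm (x - (2 * (a \<bullet> x - t) / (a \<bullet> a)) *\<^sub>R a))^2 = (norm x)^2 - 4*t*(a \<bullet> x - t)/(a \<bullet> a)"
    unfolding power2_norm_eq_inner using A
    by (simp add: inner_diff_left inner_diff_right inner_commute field_simps)
  thus ?thesis using Some by (simp add: Mref_def Phi_def hyperplane_reflection_def)
qed

lemma norm_add_scale: "(norm (c + l *\<^sub>R d))^2 = c \<bullet> c + 2*l*(c \<bullet> d) + l^2 * (d \<bullet> d)"
  unfolding power2_norm_eq_inner
  by (simp add: inner_add_left inner_add_right inner_commute algebra_simps power2_eq_square)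

lemma Minv_Phi: assumes "r > 0"
  shows "\<exists>k>0. Minv c r (Phi p) = k *\<^sub>R Phi (sphere_inversion c r p)"
proof (cases p)
  case None
  thus ?thesis by (intro exI[of _ 1]) (simp add: Minv_def Phi_def sphere_inversion_def dot_square_norm)
next
  case (Some x)
  show ?thesis
  proof (cases "x = c")
    case True
    thus ?thesis using Some assms
      by (intro exI[of _ "r^4"]) (simp add: Minv_def Phi_def sphere_inversion_def dot_square_norm)
  next
    case False
    define k where "k = (norm (x - c))^2"
    have k: "k > 0" using False by (simp add: k_def)
    have E: "(norm x)^2 - 2*(c \<bullet> x) + (c \<bullet> c) = k" unfolding k_def power2_norm_eq_inner
      by (simp add: inner_diff_left inner_diff_right inner_commute)
    have n2: "k * (norm (c + (r^2/k) *\<^sub>R (x - c)))^2 = (c \<bullet> c)*k + 2*r^2*(c \<bullet> (x - c)) + r^4"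
    proof -
      have "(norm (x - c))^2 = k" by (simp add: k_def)
      hence xc: "(x - c) \<bullet> (x - c) = k" by (simp add: power2_norm_eq_inner)
      have "(norm (c + (r^2/k) *\<^sub>R (x - c)))^2 = c \<bullet> c + 2*(r^2/k)*(c \<bullet> (x - c)) + (r^2/k)^2 * ((x-c) \<bullet> (x-c))"
        by (rule norm_add_scale)
      thus ?thesis using k xc by (simp add: field_simps power2_eq_square power4_eq_xxxx)
    qed
    show ?thesis using Some False k
      apply (intro exI[of _ k])
      apply (simp add: Minv_def Phi_def sphere_inversion_def Let_def E)
      using n2 by (simp add: field_simps k_def[symmetric])
  qed
qed


lemma refl_invol: assumes "a \<noteq> 0"
  shows "hyperplane_reflection a t (hyperplane_reflection a t p) = p"
proof (cases p)
  case None thus ?thesis by (simp add: hyperplane_reflection_def)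
next
  case (Some x)
  have A: "a \<bullet> a \<noteq> 0" using assms by simp
  define y where "y = x - (2 * (a \<bullet> x - t) / (a \<bullet> a)) *\<^sub>R a"
  have h: "a \<bullet> y = 2*t - a \<bullet> x"
    using A unfolding y_def by (simp add: inner_diff_right field_simps)
  have "y - (2 * (a \<bullet> y - t) / (a \<bullet> a)) *\<^sub>R a = x"
  proof -
    have "(2 * (a \<bullet> y - t) / (a \<bullet> a)) = - (2 * (a \<bullet> x - t) / (a \<bullet> a))"
      unfolding h using A by (simp add: field_simps)
    thus ?thesis unfolding y_def by simp
  qed
  hence "x - (2 * (a \<bullet> x - t) / (a \<bullet> a)) *\<^sub>R a -
       (2 * (a \<bullet> (x - (2 * (a \<bullet> x - t) / (a \<bullet> a)) *\<^sub>R a) - t) / (a \<bullet> a)) *\<^sub>R a = x"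
    unfolding y_def .
  thus ?thesis using Some by (simp add: hyperplane_reflection_def)
qed

lemma inv_invol: assumes "r > 0"
  shows "sphere_inversion c r (sphere_inversion c r p) = p"
proof (cases p)
  case None thus ?thesis by (simp add: sphere_inversion_def)
next
  case (Some x)
  show ?thesis
  proof (cases "x = c")
    case True thus ?thesis using Some by (simp add: sphere_inversion_def)
  next
    case False
    define k where "k = (norm (x - c))^2"
    have k: "k > 0" using False by (simp add: k_def)
    have ne: "c + (r^2/k) *\<^sub>R (x - c) \<noteq> c" using k assms False by simp
    have n: "(norm ((r^2/k) *\<^sub>R (x - c)))^2 = r^4/k"
    proof -
      have "(norm ((r^2/k) *\<^sub>R (x - c)))^2 = (r^2/k)^2 * (norm (x - c))^2"
        using k by (simp add: power_mult_distrib power_divide)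
      also have "\<dots> = (r^2/k)^2 * k" by (simp add: k_def)
      also have "\<dots> = r^4/k" using k by (simp add: power2_eq_square power4_eq_xxxx)
      finally show ?thesis .
    qed
    have "c + (r^2 / (norm ((r^2/k) *\<^sub>R (x - c)))^2) *\<^sub>R ((r^2/k) *\<^sub>R (x - c)) = x"
      unfolding n using k assms by (simp add: power4_eq_xxxx power2_eq_square)
    thus ?thesis using Some False ne by (simp add: sphere_inversion_def k_def)
  qed
qed

lemma invol_bij: "(\<And>p. f (f p) = p) \<Longrightarrow> bij f"
  by (metis bij_betw_def inj_on_inverseI surjI)

lemma Mref_linear: "linear (Mref a t)"
  by (rule linearI) (auto simp: Mref_def prod_eq_iff algebra_simps inner_add_right add_divide_distrib
     diff_divide_distrib scaleR_add_left scaleR_diff_left)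

lemma Minv_linear: "linear (Minv c r)"
  by (rule linearI) (auto simp: Minv_def Let_def prod_eq_iff algebra_simps inner_add_right)

definition good :: "('a::euclidean_space option \<Rightarrow> 'a option) \<Rightarrow> bool" where
  "good f \<longleftrightarrow> bij f \<and> (\<exists>M \<rho>. linear M \<and> \<rho> > 0 \<and> (\<forall>p. \<exists>k>0. M (Phi p) = k *\<^sub>R Phi (f p))
     \<and> (\<forall>u u'. LL (M u) (M u') = \<rho> * LL u u'))"

lemma LL_scale: "LL (k *\<^sub>R u) (k' *\<^sub>R u') = k * k' * LL u u'"
  by (simp add: LL_def algebra_simps)

lemma mobius_good: "f \<in> mobius \<Longrightarrow> good f"
proof (induction rule: mobius.induct)
  case (reflection a t)
  show ?case unfolding good_def
  proof (intro conjI exI[of _ "Mref a t"] exI[of _ 1])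
    show "bij (hyperplane_reflection a t)" using reflection refl_invol by (metis invol_bij)
    show "\<forall>p. \<exists>k>0. Mref a t (Phi p) = k *\<^sub>R Phi (hyperplane_reflection a t p)"
      using reflection Mref_Phi by (metis scaleR_one zero_less_one)
  qed (auto simp: Mref_linear Mref_LL reflection)
next
  case (inversion r c)
  show ?case unfolding good_def
  proof (intro conjI exI[of _ "Minv c r"] exI[of _ "r^4"])
    show "bij (sphere_inversion c r)" using inversion inv_invol by (metis invol_bij)
  qed (use inversion in \<open>auto simp: Minv_linear Minv_LL Minv_Phi\<close>)
next
  case (comp f g)
  from comp.IH(1) obtain Mf rf where f: "bij f" "linear Mf" "rf > 0"
    "\<forall>p. \<exists>k>0. Mf (Phi p) = k *\<^sub>R Phi (f p)" "\<forall>u u'. LL (Mf u) (Mf u') = rf * LL u u'"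
    unfolding good_def by blast
  from comp.IH(2) obtain Mg rg where g: "bij g" "linear Mg" "rg > 0"
    "\<forall>p. \<exists>k>0. Mg (Phi p) = k *\<^sub>R Phi (g p)" "\<forall>u u'. LL (Mg u) (Mg u') = rg * LL u u'"
    unfolding good_def by blast
  show ?case unfolding good_def
  proof (intro conjI exI[of _ "Mf \<circ> Mg"] exI[of _ "rf * rg"])
    show "bij (f \<circ> g)" using f g by (simp add: bij_comp)
    show "linear (Mf \<circ> Mg)" using f g by (simp add: linear_compose)
    show "0 < rf * rg" using f g by simp
    show "\<forall>u u'. LL ((Mf \<circ> Mg) u) ((Mf \<circ> Mg) u') = rf * rg * LL u u'"
      using f(5) g(5) by (simp only: o_apply mult.assoc) blast
    show "\<forall>p. \<exists>k>0. (Mf \<circ> Mg) (Phi p) = k *\<^sub>R Phi ((f \<circ> g) p)"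
    proof
      fix p
      obtain k1 where k1: "k1 > 0" "Mg (Phi p) = k1 *\<^sub>R Phi (g p)" using g by blast
      obtain k2 where k2: "k2 > 0" "Mf (Phi (g p)) = k2 *\<^sub>R Phi (f (g p))" using f by blast
      have "(Mf \<circ> Mg) (Phi p) = (k1 * k2) *\<^sub>R Phi ((f \<circ> g) p)"
        using k1 k2 f(2) by (simp add: linear_scale)
      thus "\<exists>k>0. (Mf \<circ> Mg) (Phi p) = k *\<^sub>R Phi ((f \<circ> g) p)" using k1 k2 by (intro exI[of _ "k1*k2"]) auto
    qed
  qed
qed


lemma quad_limit:
  fixes A B C :: real
  assumes "\<And>s. 0 \<le> s \<Longrightarrow> s < 1 \<Longrightarrow> A + s*B + s^2*C < 0"
  shows "A + B + C \<le> 0"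
proof -
  have lim: "((\<lambda>s. A + s*B + s^2*C) \<longlongrightarrow> A + 1*B + 1^2*C) (at_left (1::real))"
    by (intro tendsto_intros)
  have "eventually (\<lambda>s. s \<in> {0<..<1}) (at_left (1::real))"
    by (rule eventually_at_left_real) simp
  hence ev: "eventually (\<lambda>s. A + s*B + s^2*C \<le> 0) (at_left (1::real))"
    by (rule eventually_mono) (use assms in \<open>auto intro: less_imp_le\<close>)
  have "A + 1*B + 1^2*C \<le> 0"
    by (rule tendsto_le[OF trivial_limit_at_left_real tendsto_const lim ev])
  thus ?thesis by simp
qed

definition sg :: "real \<times> 'a::euclidean_space \<times> real \<Rightarrow> real" where
  "sg u = snd (snd u) - fst u"

lemma sg_add: "sg (u + v) = sg u + sg v" by (simp add: sg_def)
lemma sg_scale: "sg (k *\<^sub>R u) = k * sg u" by (simp add: sg_def algebra_simps)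
lemma sg_diff: "sg (u - v) = sg u - sg v" by (simp add: sg_def)
lemma sg_Phi_Some: "sg (Phi (Some z)) = (norm z)^2 - 1" by (simp add: sg_def Phi_def)
lemma sg_Phi_None: "sg (Phi None) = 1" by (simp add: sg_def Phi_def)
lemma LL_Phi: "LL (Phi (Some x)) (Phi (Some y)) = - (((dist x y)^2)/2)"
  by (simp add: LL_def Phi_def dist_norm power2_norm_eq_inner inner_diff_left inner_diff_right
      inner_commute field_simps)
lemma LL_diff_left: "LL (u - v) w = LL u w - LL v w" by (simp add: LL_def inner_diff_left field_simps)
lemma LL_add_left: "LL (u + v) w = LL u w + LL v w" by (simp add: LL_def inner_add_left field_simps)
lemma LL_scale_left: "LL (k *\<^sub>R u) w = k * LL u w" by (simp add: LL_def algebra_simps)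
lemma LL_scale_right: "LL w (k *\<^sub>R u) = k * LL w u" by (simp add: LL_def algebra_simps)

lemma LL_nondeg:
  assumes "\<And>q. LL w (Phi q) = 0" shows "w = (0::real \<times> 'a::euclidean_space \<times> real)"
proof -
  obtain s v t where w: "w = (s, v, t)" by (cases w) auto
  have "s = 0" using assms[of None] by (simp add: w LL_def Phi_def)
  moreover have "t = 0" using assms[of "Some 0"] by (simp add: w LL_def Phi_def)
  moreover have "v \<bullet> v = 0" using assms[of "Some v"] calculation by (simp add: w LL_def Phi_def)
  ultimately show ?thesis using w by (simp add: zero_prod_def)
qed

lemma ball_inv:
  fixes h :: "'a::euclidean_space option \<Rightarrow> 'a option"
  assumes hb: "ball_mobius h" and x: "norm x < 1" and y: "norm y < 1"
    and hx: "h (Some x) = Some x'" and hy: "h (Some y) = Some y'"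
  shows "(dist x' y')^2 * ((1-(norm x)^2)*(1-(norm y)^2)) = (dist x y)^2 * ((1-(norm x')^2)*(1-(norm y')^2))"
proof -
  have hm: "h \<in> mobius" and img: "h ` (Some ` ball 0 1) = Some ` ball 0 1"
    using hb by (auto simp: ball_mobius_def)
  obtain M \<rho> where bj: "bij h" and lin: "linear M" and rho: "\<rho> > 0"
    and Mk: "\<And>p. \<exists>k>0. M (Phi p) = k *\<^sub>R Phi (h p)"
    and MLL: "\<And>u u'. LL (M u) (M u') = \<rho> * LL u u'"
    using mobius_good[OF hm] unfolding good_def by blast
  define F where "F z = sg (M (Phi (Some z)))" for z
  define \<alpha> where "\<alpha> = sg (M (Phi None))"
  define \<gamma> where "\<gamma> = sg (M (1, 0, 0))"
  define l where "l z = sg (M (0, z, 0))" for z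
  have Fform: "F z = \<gamma> + l z + (norm z)^2 * \<alpha>" for z
  proof -
    have "Phi (Some z) = (1,0,0) + (0,z,0) + (norm z)^2 *\<^sub>R Phi None" by (simp add: Phi_def)
    moreover have "M ((1,0,0) + (0,z,0) + (norm z)^2 *\<^sub>R Phi None) = M (1,0,0) + M (0,z,0) + (norm z)^2 *\<^sub>R M (Phi None)"
      by (simp only: linear_add[OF lin] linear_scale[OF lin])
    ultimately have "M (Phi (Some z)) = M (1,0,0) + M (0,z,0) + (norm z)^2 *\<^sub>R M (Phi None)"
      by simp
    thus ?thesis unfolding F_def \<alpha>_def \<gamma>_def l_def by (simp add: sg_add sg_scale)
  qed
  have lscale: "l (c *\<^sub>R z) = c * l z" for c z
  proof -
    have "(0::real, c *\<^sub>R z, 0::real) = c *\<^sub>R (0, z, 0)" by simp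
    hence "M (0::real, c *\<^sub>R z, 0::real) = c *\<^sub>R M (0, z, 0)"
      by (simp only: linear_scale[OF lin])
    thus ?thesis unfolding l_def by (simp add: sg_scale)
  qed
  have f1: "F z < 0" if "norm z < 1" for z
  proof -
    have "Some z \<in> Some ` ball 0 1" using that by simp
    hence "h (Some z) \<in> h ` (Some ` ball 0 1)" by (rule imageI)
    hence "h (Some z) \<in> Some ` ball 0 1" using img by simp
    then obtain w where w: "h (Some z) = Some w" "norm w < 1" by auto
    obtain k where k: "k > 0" "M (Phi (Some z)) = k *\<^sub>R Phi (h (Some z))" using Mk by blast
    have "norm w * norm w < 1 * 1" using w by (intro mult_strict_mono) auto
    hence "(norm w)^2 < 1" by (simp add: power2_eq_square)
    thus ?thesis unfolding F_def using k w by (simp add: sg_scale sg_Phi_Some mult_pos_neg)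
  qed
  have f2: "F z \<ge> 0" if "norm z \<ge> 1" for z
  proof -
    obtain k where k: "k > 0" "M (Phi (Some z)) = k *\<^sub>R Phi (h (Some z))" using Mk by blast
    show ?thesis
    proof (cases "h (Some z)")
      case None thus ?thesis unfolding F_def using k by (simp add: sg_scale sg_Phi_None)
    next
      case (Some w)
      have "norm w \<ge> 1"
      proof (rule ccontr)
        assume "\<not> norm w \<ge> 1"
        hence "Some w \<in> h ` (Some ` ball 0 1)" using img by auto
        then obtain z' where z': "norm z' < 1" "h (Some z') = Some w" by auto
        hence "Some z' = Some z" using Some bj by (metis bij_pointE)
        thus False using z' that by simp
      qed
      hence "(norm w)^2 \<ge> 1" by (simp add: one_le_power)
      thus ?thesis unfolding F_def using k Some by (simp add: sg_scale sg_Phi_Some)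
    qed
  qed
  have f3: "F e = 0" if "norm e = 1" for e
  proof -
    have "\<gamma> + s * l e + s^2 * \<alpha> < 0" if "0 \<le> s" "s < 1" for s
    proof -
      have "norm (s *\<^sub>R e) < 1" using that \<open>norm e = 1\<close> by simp
      from f1[OF this] show ?thesis using \<open>norm e = 1\<close> that by (simp add: Fform lscale power_mult_distrib)
    qed
    hence "\<gamma> + l e + \<alpha> \<le> 0" by (rule quad_limit)
    moreover have "F e \<ge> 0" using f2 that by simp
    ultimately show ?thesis using that by (simp add: Fform)
  qed
  obtain e :: 'a where e: "norm e = 1" using unit_dir by blast
  have le0: "l e = 0" and ga: "\<gamma> = - \<alpha>"
  proof -
    have "F e = 0" "F (-e) = 0" using f3 e by auto
    moreover have "l (-e) = - l e" using lscale[of "-1" e] by simp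
    ultimately show "l e = 0" "\<gamma> = - \<alpha>" using e by (auto simp: Fform)
  qed
  have lz: "l z = 0" for z
  proof (cases "z = 0")
    case True thus ?thesis using lscale[of 0 z] by simp
  next
    case False
    have "F (z /\<^sub>R norm z) = 0" using f3 False by simp
    hence "l (z /\<^sub>R norm z) = 0" using False ga by (simp add: Fform)
    hence "l (norm z *\<^sub>R (z /\<^sub>R norm z)) = 0" using lscale by simp
    thus ?thesis using False by simp
  qed
  have apos: "\<alpha> > 0" using f1[of 0] ga lz by (simp add: Fform)
  have sgM: "sg (M (Phi p)) = \<alpha> * sg (Phi p)" for p
  proof (cases p)
    case None thus ?thesis by (simp add: \<alpha>_def sg_Phi_None)
  next
    case (Some z)
    have "F z = \<alpha> * ((norm z)^2 - 1)" using ga lz by (simp add: Fform algebra_simps)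
    thus ?thesis using Some by (simp add: F_def sg_Phi_Some)
  qed
  define s0 :: "real \<times> 'a \<times> real" where "s0 = 2 *\<^sub>R Phi (Some 0) - 2 *\<^sub>R Phi None"
  have LLs0: "LL s0 u = - sg u" for u by (simp add: s0_def Phi_def LL_def sg_def field_simps)
  define w0 where "w0 = M s0 - (\<rho>/\<alpha>) *\<^sub>R s0"
  have w0M: "LL w0 (M (Phi p)) = 0" for p
  proof -
    have "LL (M s0) (M (Phi p)) = \<rho> * LL s0 (Phi p)" by (rule MLL)
    also have "\<dots> = - \<rho> * sg (Phi p)" by (simp add: LLs0)
    finally have a1: "LL (M s0) (M (Phi p)) = - \<rho> * sg (Phi p)" .
    have a2: "LL s0 (M (Phi p)) = - \<alpha> * sg (Phi p)" by (simp add: LLs0 sgM)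
    show ?thesis unfolding w0_def using a1 a2 apos by (simp add: LL_diff_left LL_scale_left)
  qed
  have "LL w0 (Phi q) = 0" for q
  proof -
    obtain p where p: "h p = q" using bj by (metis bij_pointE)
    obtain k where k: "k > 0" "M (Phi p) = k *\<^sub>R Phi (h p)" using Mk by blast
    have "k * LL w0 (Phi q) = 0" using w0M[of p] k p by (simp add: LL_scale_right)
    thus ?thesis using k by simp
  qed
  hence "w0 = 0" by (rule LL_nondeg)
  hence Ms0: "M s0 = (\<rho>/\<alpha>) *\<^sub>R s0" unfolding w0_def by simp
  have "LL (M s0) (M s0) = \<rho> * LL s0 s0" by (rule MLL)
  hence "(\<rho>/\<alpha>) * (\<rho>/\<alpha>) * LL s0 s0 = \<rho> * LL s0 s0" by (simp add: Ms0 LL_scale_left LL_scale_right)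
  moreover have "LL s0 s0 = 4" by (simp add: s0_def Phi_def LL_def)
  ultimately have "(\<rho>/\<alpha>) * (\<rho>/\<alpha>) * 4 = \<rho> * 4" by (simp only:)
  hence "(\<rho>/\<alpha>) * (\<rho>/\<alpha>) = \<rho>" by (metis mult_cancel_right zero_neq_numeral)
  hence rhoa: "\<rho> = \<alpha>^2" using rho apos by (simp add: field_simps power2_eq_square)
  obtain kx where kx: "kx > 0" "M (Phi (Some x)) = kx *\<^sub>R Phi (Some x')" using Mk hx by metis
  obtain ky where ky: "ky > 0" "M (Phi (Some y)) = ky *\<^sub>R Phi (Some y')" using Mk hy by metis
  have e1: "kx * ky * (dist x' y')^2 = \<rho> * (dist x y)^2"
    using MLL[of "Phi (Some x)" "Phi (Some y)"] kx ky by (simp add: LL_scale_left LL_scale_right LL_Phi mult.assoc mult.left_commute)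
  have e2: "kx * ((norm x')^2 - 1) = \<alpha> * ((norm x)^2 - 1)"
    using sgM[of "Some x"] kx by (simp add: sg_scale sg_Phi_Some)
  have e3: "ky * ((norm y')^2 - 1) = \<alpha> * ((norm y)^2 - 1)"
    using sgM[of "Some y"] ky by (simp add: sg_scale sg_Phi_Some)
  have "\<rho> * ((dist x' y')^2 * ((1-(norm x)^2)*(1-(norm y)^2)))
      = (dist x' y')^2 * ((\<alpha> * ((norm x)^2 - 1)) * (\<alpha> * ((norm y)^2 - 1)))"
    by (simp add: rhoa algebra_simps power2_eq_square)
  also have "\<dots> = (dist x' y')^2 * ((kx * ((norm x')^2 - 1)) * (ky * ((norm y')^2 - 1)))"
    by (simp only: e2 e3)
  also have "\<dots> = (kx * ky * (dist x' y')^2) * (((norm x')^2 - 1) * ((norm y')^2 - 1))"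
    by (simp add: algebra_simps)
  also have "\<dots> = (\<rho> * (dist x y)^2) * (((norm x')^2 - 1) * ((norm y')^2 - 1))"
    by (simp only: e1)
  also have "\<dots> = \<rho> * ((dist x y)^2 * ((1-(norm x')^2)*(1-(norm y')^2)))"
    by (simp add: algebra_simps)
  finally show ?thesis using rho by simp
qed


lemma metric_form:
  fixes x y :: "'a::euclidean_space"
  assumes d: "d \<in> {jstar_metric, w_metric, s_metric, p_metric}" and x: "norm x < 1" and y: "norm y < 1"
  shows "\<exists>Den. d (ball 0 1) x y = dist x y / Den \<and> sqrt((dist x y)^2 + 4*(1-norm x)*(1-norm y)) \<le> Den
     \<and> Den \<le> dist x y + 2*min (1-norm x) (1-norm y)"
proof -
  have jb: "sqrt((dist x y)^2 + 4*(1-norm x)*(1-norm y)) \<le> dist x y + 2 * min (1-norm x) (1-norm y)"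
    by (rule J_bound[OF x y])
  from d consider "d = jstar_metric" | "d = w_metric" | "d = s_metric" | "d = p_metric" by blast
  then show ?thesis
  proof cases
    case 1
    show ?thesis using jb x y
      by (intro exI[of _ "dist x y + 2 * min (1-norm x) (1-norm y)"])
        (simp add: 1 jstar_metric_def bdist_B)
  next
    case 2
    define I1 where "I1 = Inf (dist x ` w_refl_set (ball 0 1) y)"
    define I2 where "I2 = Inf (dist y ` w_refl_set (ball 0 1) x)"
    have i1: "sqrt((dist x y)^2 + 4*(1-norm x)*(1-norm y)) \<le> I1" "I1 \<le> dist x y + 2*(1-norm y)"
      using W_Inf[OF x y] by (auto simp: I1_def)
    have eqq: "(dist y x)^2 + 4*(1-norm y)*(1-norm x) = (dist x y)^2 + 4*(1-norm x)*(1-norm y)"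
      by (simp add: dist_commute algebra_simps)
    have i2: "sqrt((dist x y)^2 + 4*(1-norm x)*(1-norm y)) \<le> I2" "I2 \<le> dist x y + 2*(1-norm x)"
      using W_Inf[OF y x] unfolding I2_def eqq by (auto simp: dist_commute)
    have "d (ball 0 1) x y = dist x y / min I1 I2"
      by (simp add: 2 w_metric_def I1_def I2_def)
    moreover have "sqrt((dist x y)^2 + 4*(1-norm x)*(1-norm y)) \<le> min I1 I2" using i1 i2 by simp
    moreover have "min I1 I2 \<le> dist x y + 2*min (1-norm x) (1-norm y)" using i1 i2
      by (simp add: min_def)
    ultimately show ?thesis by blast
  next
    case 3
    define I where "I = Inf ((\<lambda>z. dist x z + dist z y) ` sphere 0 1)"
    have i: "sqrt((dist x y)^2 + 4*(1-norm x)*(1-norm y)) \<le> I" "I \<le> dist x y + 2*(1-norm y)"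
      "I \<le> dist x y + 2*(1-norm x)"
      using S_Inf[OF x y] by (auto simp: I_def)
    have "d (ball 0 1) x y = dist x y / I"
      by (simp add: 3 s_metric_def I_def frontier_B)
    moreover have "I \<le> dist x y + 2*min (1-norm x) (1-norm y)" using i by (simp add: min_def)
    ultimately show ?thesis using i by blast
  next
    case 4
    show ?thesis using jb x y
      by (intro exI[of _ "sqrt((dist x y)^2 + 4*(1-norm x)*(1-norm y))"])
        (simp add: 4 p_metric_def bdist_B mult.assoc)
  qed
qed

definition Tf :: "'a::euclidean_space \<Rightarrow> 'a \<Rightarrow> real" where
  "Tf x y = sqrt((dist x y)^2/((dist x y)^2 + (1-(norm x)^2)*(1-(norm y)^2)))"

lemma metric_props:
  fixes x y :: "'a::euclidean_space"
  assumes d: "d \<in> {jstar_metric, w_metric, s_metric, p_metric}" and x: "norm x < 1" and y: "norm y < 1"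
  shows "d (ball 0 1) x y \<le> Tf x y" "Tf x y \<le> 2 * d (ball 0 1) x y / (1 + (d (ball 0 1) x y)^2)"
    "0 \<le> d (ball 0 1) x y"
    "dist x y / (dist x y + 2*min (1-norm x) (1-norm y)) \<le> d (ball 0 1) x y"
    "d (ball 0 1) x y \<le> dist x y / sqrt((dist x y)^2 + 4*(1-norm x)*(1-norm y))"
proof -
  obtain Den where Den: "d (ball 0 1) x y = dist x y / Den"
    "sqrt((dist x y)^2 + 4*(1-norm x)*(1-norm y)) \<le> Den"
    "Den \<le> dist x y + 2*min (1-norm x) (1-norm y)"
    using metric_form[OF d x y] by blast
  have tri: "dist x y \<le> 2 - (1-norm x) - (1-norm y)"
    using norm_triangle_ineq4[of x y] by (simp add: dist_norm)
  have P: "(1-norm x)*(2-(1-norm x))*((1-norm y)*(2-(1-norm y))) = (1-(norm x)^2)*(1-(norm y)^2)"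
    by (simp add: algebra_simps power2_eq_square)
  note g = G[of "1-norm x" "1-norm y" "dist x y" Den, unfolded P]
  have hyp: "0 < 1-norm x" "1-norm x \<le> 1" "0 < 1-norm y" "1-norm y \<le> 1" "0 \<le> dist x y"
    using x y by auto
  show "d (ball 0 1) x y \<le> Tf x y" unfolding Den(1) Tf_def using g(1) hyp tri Den by simp
  show "Tf x y \<le> 2 * d (ball 0 1) x y / (1 + (d (ball 0 1) x y)^2)"
    unfolding Den(1) Tf_def using g(2) hyp tri Den by simp
  show "0 \<le> d (ball 0 1) x y" unfolding Den(1) using g(3) hyp tri Den by simp
  have s0: "0 < sqrt((dist x y)^2 + 4*(1-norm x)*(1-norm y))" using hyp
    by (intro real_sqrt_gt_zero add_nonneg_pos) auto
  have Denp: "0 < Den" using s0 Den by linarith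
  have "0 < min (1-norm x) (1-norm y)" using hyp by simp
  hence m2: "0 < 2*min (1-norm x) (1-norm y)" by simp
  have mp: "0 < dist x y + 2*min (1-norm x) (1-norm y)" by (rule add_nonneg_pos[OF hyp(5) m2])
  show "dist x y / (dist x y + 2*min (1-norm x) (1-norm y)) \<le> d (ball 0 1) x y"
    unfolding Den(1) using Den Denp mp hyp by (intro divide_left_mono) auto
  show "d (ball 0 1) x y \<le> dist x y / sqrt((dist x y)^2 + 4*(1-norm x)*(1-norm y))"
    unfolding Den(1) using Den Denp s0 hyp by (intro divide_left_mono) auto
qed

lemma Tf_inv:
  fixes h :: "'a::euclidean_space option \<Rightarrow> 'a option"
  assumes hb: "ball_mobius h" and x: "norm x < 1" and y: "norm y < 1"
    and hx: "h (Some x) = Some x'" and hy: "h (Some y) = Some y'" and x': "norm x' < 1" and y': "norm y' < 1"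
  shows "Tf x' y' = Tf x y"
proof -
  have e: "(dist x' y')^2 * ((1-(norm x)^2)*(1-(norm y)^2)) = (dist x y)^2 * ((1-(norm x')^2)*(1-(norm y')^2))"
    by (rule ball_inv[OF hb x y hx hy])
  have lt1: "(norm z)^2 < 1" if "norm z < 1" for z :: 'a
  proof -
    have "norm z * norm z < 1 * 1" using that by (intro mult_strict_mono) auto
    thus ?thesis by (simp add: power2_eq_square)
  qed
  have P: "0 < (1-(norm x)^2)*(1-(norm y)^2)" using lt1[OF x] lt1[OF y] by simp
  have P': "0 < (1-(norm x')^2)*(1-(norm y')^2)" using lt1[OF x'] lt1[OF y'] by simp
  have "(dist x' y')^2/((dist x' y')^2 + (1-(norm x')^2)*(1-(norm y')^2))
      = (dist x y)^2/((dist x y)^2 + (1-(norm x)^2)*(1-(norm y)^2))"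
  proof -
    have p1: "0 < (dist x' y')^2 + (1-(norm x')^2)*(1-(norm y')^2)" using P' by (simp add: add_nonneg_pos)
    have p2: "0 < (dist x y)^2 + (1-(norm x)^2)*(1-(norm y)^2)" using P by (simp add: add_nonneg_pos)
    have "(dist x' y')^2 * ((dist x y)^2 + (1-(norm x)^2)*(1-(norm y)^2))
        = (dist x y)^2 * ((dist x' y')^2 + (1-(norm x')^2)*(1-(norm y')^2))"
      using e by (simp add: algebra_simps)
    thus ?thesis using p1 p2 by (simp add: field_simps)
  qed
  thus ?thesis unfolding Tf_def by simp
qed

lemma orth_inv_ball:
  fixes C :: "'a::euclidean_space"
  assumes r: "r > 0" and C: "(norm C)^2 = 1 + r^2"
  shows "ball_mobius (sphere_inversion C r)"
proof -
  have Cn: "norm C > 1"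
  proof -
    have "1 < (norm C)^2" using C r by simp
    thus ?thesis using power2_less_imp_less[of 1 "norm C"] by simp
  qed
  have img1: "sphere_inversion C r (Some z) \<in> Some ` ball 0 1" if z: "norm z < 1" for z
  proof -
    have zC: "z \<noteq> C" using z Cn by auto
    define K where "K = (norm (z - C))^2"
    have K: "K > 0" using zC by (simp add: K_def)
    have KK: "(z - C) \<bullet> (z - C) = K" by (simp add: K_def power2_norm_eq_inner)
    have n: "(norm (C + (r^2/K) *\<^sub>R (z - C)))^2 = C \<bullet> C + 2*(r^2/K)*(C \<bullet> (z - C)) + (r^2/K)^2 * ((z-C) \<bullet> (z-C))"
      by (rule norm_add_scale)
    have KC: "K + 2*(C \<bullet> (z - C)) = (norm z)^2 - (norm C)^2"
      unfolding KK[symmetric] power2_norm_eq_inner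
      by (simp add: inner_diff_left inner_diff_right inner_commute)
    have "(norm (C + (r^2/K) *\<^sub>R (z - C)))^2 - 1 = r^2 * (K + 2*(C \<bullet> (z - C)) + r^2) / K"
      unfolding n KK using K C by (simp add: field_simps power2_eq_square dot_square_norm)
    also have "\<dots> = r^2 * ((norm z)^2 - 1) / K" unfolding KC using C by simp
    also have "\<dots> < 0"
    proof -
      have "norm z * norm z < 1 * 1" using z by (intro mult_strict_mono) auto
      hence "(norm z)^2 - 1 < 0" by (simp add: power2_eq_square)
      thus ?thesis using K r by (simp add: divide_neg_pos mult_pos_neg)
    qed
    finally have "(norm (C + (r^2/K) *\<^sub>R (z - C)))^2 < 1" by simp
    hence "norm (C + (r^2/K) *\<^sub>R (z - C)) < 1"
      using power2_less_imp_less[of "norm (C + (r^2/K) *\<^sub>R (z - C))" 1] by simp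
    thus ?thesis using zC by (simp add: sphere_inversion_def K_def)
  qed
  have "sphere_inversion C r ` (Some ` ball 0 1) = Some ` ball 0 1"
  proof
    show "sphere_inversion C r ` Some ` ball 0 1 \<subseteq> Some ` ball 0 1" using img1 by auto
    show "Some ` ball 0 1 \<subseteq> sphere_inversion C r ` Some ` ball 0 1"
    proof
      fix q assume "q \<in> Some ` ball (0::'a) 1"
      then obtain w where w: "q = Some w" "norm w < 1" by auto
      obtain w' where w': "sphere_inversion C r (Some w) = Some w'" "norm w' < 1" using img1[OF w(2)] by auto
      have "sphere_inversion C r (Some w') = Some w" using inv_invol[OF r, of C "Some w"] w' by simp
      thus "q \<in> sphere_inversion C r ` Some ` ball 0 1" using w w' by force
    qed
  qed
  moreover have "sphere_inversion C r \<in> mobius" using r by (rule mobius.inversion)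
  ultimately show ?thesis by (simp add: ball_mobius_def)
qed

lemma div_sq_cancel:
  fixes a b :: real assumes "a \<noteq> 0" shows "b / a^2 * a = b / a"
proof -
  have "b / a^2 * a = (b * a) / (a * a)" by (simp add: power2_eq_square)
  also have "\<dots> = b / a" using assms by simp
  finally show ?thesis .
qed

lemma inv_line:
  fixes e :: "'a::euclidean_space"
  assumes e: "norm e = 1" and s: "s \<noteq> k"
  shows "sphere_inversion (k *\<^sub>R e) r (Some (s *\<^sub>R e)) = Some ((k + r^2/(s - k)) *\<^sub>R e)"
proof -
  have ne: "s *\<^sub>R e \<noteq> k *\<^sub>R e" using s e by (metis norm_zero scaleR_cancel_right zero_neq_one)
  have d: "s *\<^sub>R e - k *\<^sub>R e = (s - k) *\<^sub>R e" by (simp add: scaleR_diff_left)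
  have "k *\<^sub>R e + (r^2 / (norm ((s - k) *\<^sub>R e))^2) *\<^sub>R ((s - k) *\<^sub>R e) = (k + r^2/(s - k)) *\<^sub>R e"
  proof -
    have nn: "(norm ((s - k) *\<^sub>R e))^2 = (s-k)^2"
      by (simp only: norm_scaleR e mult_1_right power2_abs)
    have "(r^2 / (norm ((s - k) *\<^sub>R e))^2) * (s - k) = r^2/(s-k)"
      unfolding nn using s by (intro div_sq_cancel) simp
    thus ?thesis by (simp add: scaleR_add_left)
  qed
  thus ?thesis using ne by (simp add: sphere_inversion_def d)
qed

lemma sharp:
  fixes c :: real
  assumes c: "c < 2" and d: "d \<in> {jstar_metric, w_metric, s_metric, p_metric}"
  shows "\<exists>h x y. ball_mobius (h :: 'a::euclidean_space option \<Rightarrow> 'a option) \<and> x \<in> ball 0 1 \<and> y \<in> ball 0 1 \<and>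
        d (ball 0 1) (the (h (Some x))) (the (h (Some y))) > c * d (ball 0 1) x y"
proof -
  obtain e :: 'a where e: "norm e = 1" using unit_dir by blast
  define \<eta> where "\<eta> = min (1/4) ((2-c)/8)"
  have eta1: "\<eta> \<le> 1/4" unfolding \<eta>_def by (rule min.cobounded1)
  have eta2: "\<eta> \<le> (2-c)/8" unfolding \<eta>_def by (rule min.cobounded2)
  have eta0: "0 < \<eta>" using c unfolding \<eta>_def by simp
  note eta = eta0 eta1 eta2
  define k where "k = 1 + \<eta>"
  define r where "r = sqrt (2*\<eta> + \<eta>^2)"
  have rr: "0 < 2*\<eta> + \<eta>^2" using eta by (simp add: add_pos_nonneg)
  have r: "r > 0" "r^2 = 2*\<eta> + \<eta>^2" using rr by (auto simp: r_def)
  have nk: "norm (k *\<^sub>R e) = \<bar>k\<bar>" by (simp only: norm_scaleR e mult_1_right)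
  have Cn: "(norm (k *\<^sub>R e))^2 = 1 + r^2" unfolding nk r(2) using eta unfolding k_def
    by (simp add: power2_eq_square algebra_simps)
  define h where "h = sphere_inversion (k *\<^sub>R e) r"
  have hb: "ball_mobius h" unfolding h_def by (rule orth_inv_ball[OF r(1) Cn])
  define x where "x = (-\<eta>) *\<^sub>R e"
  define y where "y = \<eta> *\<^sub>R e"
  define p where "p = (1+\<eta>+\<eta>^2)/(1+2*\<eta>)"
  define q where "q = 1 - \<eta> - \<eta>^2"
  have hx: "h (Some x) = Some (p *\<^sub>R e)"
  proof -
    have "h (Some x) = Some ((k + r^2/(-\<eta> - k)) *\<^sub>R e)" unfolding h_def x_def
      using eta by (intro inv_line e) (simp add: k_def)
    moreover have "k + r^2/(-\<eta> - k) = p" unfolding k_def r(2) p_def using eta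
      by (simp add: field_simps power2_eq_square)
    ultimately show ?thesis by simp
  qed
  have hy: "h (Some y) = Some (q *\<^sub>R e)"
  proof -
    have "h (Some y) = Some ((k + r^2/(\<eta> - k)) *\<^sub>R e)" unfolding h_def y_def
      using eta by (intro inv_line e) (simp add: k_def)
    moreover have "k + r^2/(\<eta> - k) = q" unfolding k_def r(2) q_def using eta
      by (simp add: field_simps power2_eq_square)
    ultimately show ?thesis by simp
  qed
  have e2: "\<eta>^2 \<le> \<eta>/4" using eta by (simp add: power2_eq_square mult_left_mono)
  have e3: "0 \<le> \<eta>^2" by simp
  have q: "0 < q" "q < 1" unfolding q_def using eta e2 e3 by linarith+
  have pq1: "1 - p = \<eta>*(1-\<eta>)/(1+2*\<eta>)" unfolding p_def using eta
    by (simp add: field_simps power2_eq_square)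
  have pq2: "p - q = 2*\<eta>^2*(2+\<eta>)/(1+2*\<eta>)" unfolding p_def q_def using eta
    by (simp add: field_simps power2_eq_square)
  have p: "0 < p" "p < 1" "q < p"
  proof -
    have "0 < \<eta>*(1-\<eta>)/(1+2*\<eta>)" using eta by simp
    moreover have "0 < 2*\<eta>^2*(2+\<eta>)/(1+2*\<eta>)" using eta by simp
    ultimately show "0 < p" "p < 1" "q < p" using pq1 pq2 q by linarith+
  qed
  have xb: "norm x < 1" "norm y < 1" using eta e by (auto simp: x_def y_def)
  have pb: "norm (p *\<^sub>R e) < 1" "norm (q *\<^sub>R e) < 1" using p q e by auto
  have dxy: "dist x y = 2*\<eta>"
  proof -
    have "x - y = (-\<eta> - \<eta>) *\<^sub>R e" unfolding x_def y_def by (simp only: scaleR_diff_left)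
    hence "dist x y = \<bar>-\<eta> - \<eta>\<bar> * norm e" by (simp only: dist_norm norm_scaleR)
    thus ?thesis using e eta by simp
  qed
  have dpq: "dist (p *\<^sub>R e) (q *\<^sub>R e) = p - q"
  proof -
    have "p *\<^sub>R e - q *\<^sub>R e = (p - q) *\<^sub>R e" by (simp only: scaleR_diff_left)
    hence "dist (p *\<^sub>R e) (q *\<^sub>R e) = \<bar>p - q\<bar> * norm e" by (simp only: dist_norm norm_scaleR)
    thus ?thesis using e p by simp
  qed
  have nx: "norm x = \<eta>" "norm y = \<eta>" using e eta by (auto simp: x_def y_def)
  have np: "norm (p *\<^sub>R e) = p" "norm (q *\<^sub>R e) = q" using e p q by auto
  define J where "J = \<eta>*(2+\<eta>)/(1+\<eta>+\<eta>^2)"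
  have J: "J \<le> d (ball 0 1) (p *\<^sub>R e) (q *\<^sub>R e)"
  proof -
    have "min (1 - p) (1 - q) = 1 - p" using p by simp
    hence "dist (p *\<^sub>R e) (q *\<^sub>R e) / (dist (p *\<^sub>R e) (q *\<^sub>R e) + 2*min (1-norm (p *\<^sub>R e)) (1-norm (q *\<^sub>R e)))
       = (p - q)/((p-q) + 2*(1-p))" unfolding dpq np by simp
    also have "\<dots> = J"
    proof -
      have E: "0 < 1+2*\<eta>" "0 < 1+\<eta>+\<eta>^2" using eta by (auto simp: add_pos_nonneg)
      have s0: "(p-q) + 2*(1-p) = (2*\<eta>^2*(2+\<eta>) + 2*(\<eta>*(1-\<eta>)))/(1+2*\<eta>)"
        unfolding pq1 pq2 by (simp add: add_divide_distrib)
      have nm: "2*\<eta>^2*(2+\<eta>) + 2*(\<eta>*(1-\<eta>)) = 2*\<eta>*(1+\<eta>+\<eta>^2)"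
        by (simp add: algebra_simps power2_eq_square)
      have s1: "(p-q) + 2*(1-p) = (2*\<eta>*(1+\<eta>+\<eta>^2))/(1+2*\<eta>)"
        using s0 unfolding nm .
      have "(p - q)/((p-q) + 2*(1-p)) = (2*\<eta>^2*(2+\<eta>)/(1+2*\<eta>)) / ((2*\<eta>*(1+\<eta>+\<eta>^2))/(1+2*\<eta>))"
        by (subst s1) (simp only: pq2)
      also have "\<dots> = (2*\<eta>^2*(2+\<eta>)) / (2*\<eta>*(1+\<eta>+\<eta>^2))" using E by simp
      also have "\<dots> = (2*\<eta>) * (\<eta>*(2+\<eta>)) / ((2*\<eta>) * (1+\<eta>+\<eta>^2))"
        by (simp add: power2_eq_square mult_ac)
      also have "\<dots> = J" unfolding J_def using eta(1) by simp
      finally show ?thesis .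
    qed
    finally show ?thesis using metric_props(4)[OF d pb] by simp
  qed
  have Jpos: "0 < J" using eta by (simp add: J_def add_pos_nonneg)
  have dxy_le: "d (ball 0 1) x y \<le> \<eta>/(1-\<eta>)"
  proof -
    have sp: "0 < sqrt((2*\<eta>)^2 + 4*(1-\<eta>)*(1-\<eta>))" using eta
      by (intro real_sqrt_gt_zero add_pos_nonneg) auto
    have le: "2*(1-\<eta>) \<le> sqrt((2*\<eta>)^2 + 4*(1-\<eta>)*(1-\<eta>))"
    proof (intro real_le_rsqrt)
      have "0 \<le> (2*\<eta>)^2" by simp
      moreover have "(2*(1-\<eta>))^2 = 4*(1-\<eta>)*(1-\<eta>)" by (simp add: power2_eq_square algebra_simps)
      ultimately show "(2*(1-\<eta>))^2 \<le> (2*\<eta>)^2 + 4*(1-\<eta>)*(1-\<eta>)" by linarith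
    qed
    have p2: "0 < 2*(1-\<eta>)" using eta by simp
    have "d (ball 0 1) x y \<le> dist x y / sqrt((dist x y)^2 + 4*(1-norm x)*(1-norm y))"
      by (rule metric_props(5)[OF d xb])
    also have "\<dots> = 2*\<eta> / sqrt((2*\<eta>)^2 + 4*(1-\<eta>)*(1-\<eta>))" by (simp add: dxy nx)
    also have "\<dots> \<le> 2*\<eta> / (2*(1-\<eta>))"
      by (rule divide_left_mono[OF le]) (use eta sp p2 in \<open>auto intro!: mult_pos_pos\<close>)
    also have "\<dots> = \<eta>/(1-\<eta>)" by (rule mult_divide_mult_cancel_left) simp
    finally show ?thesis .
  qed
  have d0: "0 \<le> d (ball 0 1) x y" by (rule metric_props(3)[OF d xb])
  have "c * d (ball 0 1) x y < J"
  proof (cases "c \<le> 0")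
    case True
    hence "c * d (ball 0 1) x y \<le> 0" using d0 by (simp add: mult_nonpos_nonneg)
    thus ?thesis using Jpos by linarith
  next
    case False
    have "c * d (ball 0 1) x y \<le> c * (\<eta>/(1-\<eta>))" using False dxy_le by (intro mult_left_mono) auto
    also have "\<dots> < J"
    proof -
      have k1: "\<eta>*(2+2*c) < 2 - c"
      proof -
        have "\<eta>*(2+2*c) < \<eta>*8" using eta(1) c by (intro mult_strict_left_mono) auto
        moreover have "\<eta>*8 \<le> 2-c" using eta(3) by simp
        ultimately show ?thesis by linarith
      qed
      have k2: "c*(1+\<eta>+\<eta>^2) \<le> c*(1+2*\<eta>)" using False e2 eta by (intro mult_left_mono) auto
      have k3: "2 - 2*\<eta> \<le> (2+\<eta>)*(1-\<eta>)" using e2 eta by (simp add: algebra_simps power2_eq_square)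
      have a1: "c*(1+2*\<eta>) = c + 2*(c*\<eta>)" "\<eta>*(2+2*c) = 2*\<eta> + 2*(c*\<eta>)"
        by (simp_all add: algebra_simps)
      have "c*(1+\<eta>+\<eta>^2) < (2+\<eta>)*(1-\<eta>)" using k1 k2 k3 a1 by linarith
      hence "\<eta> * (c*(1+\<eta>+\<eta>^2)) < \<eta> * ((2+\<eta>)*(1-\<eta>))"
        using eta(1) by (rule mult_strict_left_mono)
      moreover have "\<eta> * (c*(1+\<eta>+\<eta>^2)) = c * \<eta> * (1+\<eta>+\<eta>^2)"
        "\<eta> * ((2+\<eta>)*(1-\<eta>)) = \<eta>*(2+\<eta>)*(1-\<eta>)" by (simp_all add: algebra_simps)
      ultimately have ineq: "c * \<eta> * (1+\<eta>+\<eta>^2) < \<eta>*(2+\<eta>)*(1-\<eta>)" by simp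
      have pos: "0 < 1-\<eta>" "0 < 1+\<eta>+\<eta>^2" using eta by (auto simp: add_pos_nonneg)
      have mpos: "0 < (1-\<eta>)*(1+\<eta>+\<eta>^2)" using pos by simp
      have L: "c*(\<eta>/(1-\<eta>)) * ((1-\<eta>)*(1+\<eta>+\<eta>^2)) = c * \<eta> * (1+\<eta>+\<eta>^2)"
        using pos by (simp add: field_simps)
      have R: "J * ((1-\<eta>)*(1+\<eta>+\<eta>^2)) = \<eta>*(2+\<eta>)*(1-\<eta>)"
        unfolding J_def using pos by (simp add: field_simps)
      have "c*(\<eta>/(1-\<eta>)) * ((1-\<eta>)*(1+\<eta>+\<eta>^2)) < J * ((1-\<eta>)*(1+\<eta>+\<eta>^2))"
        unfolding L R by (rule ineq)
      thus ?thesis using mult_less_cancel_right_pos[OF mpos] by blast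
    qed
    finally show ?thesis .
  qed
  hence lt: "c * d (ball 0 1) x y < d (ball 0 1) (p *\<^sub>R e) (q *\<^sub>R e)" using J by linarith
  have tx: "the (h (Some x)) = p *\<^sub>R e" by (simp add: hx)
  have ty: "the (h (Some y)) = q *\<^sub>R e" by (simp add: hy)
  have xin: "x \<in> ball 0 1" "y \<in> ball 0 1" using xb by simp_all
  show ?thesis
    apply (rule exI[of _ h], rule exI[of _ x], rule exI[of _ y])
    apply (intro conjI hb xin)
    unfolding tx ty by (rule lt)
qed

theorem corollary4p10:
  assumes "DIM('a::euclidean_space) \<ge> 2"
  shows "\<forall>d \<in> {jstar_metric, w_metric, s_metric, p_metric}.
     (\<forall>h x y. ball_mobius (h :: 'a option \<Rightarrow> 'a option) \<and> x \<in> ball 0 1 \<and> y \<in> ball 0 1 \<longrightarrow>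
        d (ball 0 1) (the (h (Some x))) (the (h (Some y)))
          \<le> 2 * d (ball 0 1) x y / (1 + (d (ball 0 1) x y)\<^sup>2)
        \<and> 2 * d (ball 0 1) x y / (1 + (d (ball 0 1) x y)\<^sup>2) \<le> 2 * d (ball 0 1) x y)
   \<and> (\<forall>c < 2. \<exists>h x y. ball_mobius (h :: 'a option \<Rightarrow> 'a option) \<and> x \<in> ball 0 1 \<and> y \<in> ball 0 1 \<and>
        d (ball 0 1) (the (h (Some x))) (the (h (Some y))) > c * d (ball 0 1) x y)"
proof (intro ballI conjI allI impI)
  fix d :: "'a set \<Rightarrow> 'a \<Rightarrow> 'a \<Rightarrow> real"
  assume d: "d \<in> {jstar_metric, w_metric, s_metric, p_metric}"
  fix c :: real assume "c < 2"
  thus "\<exists>h x y. ball_mobius (h :: 'a option \<Rightarrow> 'a option) \<and> x \<in> ball 0 1 \<and> y \<in> ball 0 1 \<and>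
        d (ball 0 1) (the (h (Some x))) (the (h (Some y))) > c * d (ball 0 1) x y"
    using sharp d by blast
next
  fix d :: "'a set \<Rightarrow> 'a \<Rightarrow> 'a \<Rightarrow> real" and h :: "'a option \<Rightarrow> 'a option" and x y :: 'a
  assume d: "d \<in> {jstar_metric, w_metric, s_metric, p_metric}"
  assume H: "ball_mobius h \<and> x \<in> ball 0 1 \<and> y \<in> ball 0 1"
  hence hb: "ball_mobius h" and x: "norm x < 1" and y: "norm y < 1" by auto
  have img: "h ` (Some ` ball 0 1) = Some ` ball 0 1" using hb by (simp add: ball_mobius_def)
  have "h (Some x) \<in> Some ` ball 0 1" using img x by (metis image_eqI mem_ball_0)
  then obtain x' where x': "h (Some x) = Some x'" "norm x' < 1" by auto
  have "h (Some y) \<in> Some ` ball 0 1" using img y by (metis image_eqI mem_ball_0)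
  then obtain y' where y': "h (Some y) = Some y'" "norm y' < 1" by auto
  have "d (ball 0 1) x' y' \<le> Tf x' y'" by (rule metric_props(1)[OF d x'(2) y'(2)])
  also have "\<dots> = Tf x y" by (rule Tf_inv[OF hb x y x'(1) y'(1) x'(2) y'(2)])
  also have "\<dots> \<le> 2 * d (ball 0 1) x y / (1 + (d (ball 0 1) x y)\<^sup>2)" by (rule metric_props(2)[OF d x y])
  finally show "d (ball 0 1) (the (h (Some x))) (the (h (Some y)))
          \<le> 2 * d (ball 0 1) x y / (1 + (d (ball 0 1) x y)\<^sup>2)" using x' y' by simp
  have d0: "0 \<le> d (ball 0 1) x y" by (rule metric_props(3)[OF d x y])
  show "2 * d (ball 0 1) x y / (1 + (d (ball 0 1) x y)\<^sup>2) \<le> 2 * d (ball 0 1) x y"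
  proof -
    have "0 < 1 + (d (ball 0 1) x y)\<^sup>2" by (simp add: add_pos_nonneg)
    moreover have "2 * d (ball 0 1) x y * 1 \<le> 2 * d (ball 0 1) x y * (1 + (d (ball 0 1) x y)\<^sup>2)"
      using d0 by (intro mult_left_mono) auto
    ultimately show ?thesis by (simp add: divide_le_eq)
  qed
qed

end
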